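(* Let $(X,b,m)$ be a connected weighted graph satisfying conditions (B) and (M), and let $D\subset X$ be non-empty. Then there exists a Voronoi decomposition of $X$ with centers from $D$. Moreover, whenever $R=\mathrm{Covr}(D)$ is finite, every Voronoi decomposition $(V_p)_{p\in D}$ of $X$ with centers from $D$ satisfies $V_p\subset B_R(p)$ for all $p\in D$.
   Context: A weighted graph $(X,b,m)$: $X$ countable, $b:X\times X\to[0,\infty)$ symmetric with $b(x,x)=0$ and $\sum_y b(x,y)<\infty$, $m:X\to(0,\infty)$. Condition (B): $\sup_x\frac{1}{m(x)}\sum_y b(x,y)<\infty$. Condition (M): $\sup_x m(x)<\infty$. A path from $x_0$ to $x_k$ is $\gamma=(x_0,\dots,x_k)$ with $b(x_j,x_{j+1})>0$, of length $L(\gamma)=\sum_{j=0}^{k-1}1/b(x_j,x_{j+1})$ (trivial paths have length $0$); it lies in a set $V$ if all $x_j\in V$. Connected means any two points are joined by a path; $d(x,y)$ is the infimum of lengths of paths from $x$ to $y$; $B_r(x):=\{y:d(x,y)\le r\}$. $\mathrm{Covr}(D):=\inf\{R>0:\bigcup_{p\in D}B_R(p)=X\}\in[0,\infty]$. A Voronoi decomposition of $X$ with centers from $D$ is a pairwise disjoint family $(V_p)_{p\in D}$ of subsets of $X$ such that: (V1) for each $p\in D$, $p\in V_p$, and for every $x\in V_p$ there is a path from $p$ to $x$ lying in $V_p$ with length $d(p,x)$; (V2) for each $p\in D$ and $x\in V_p$, $d(p,x)\le d(q,x)$ for all $q\in D$; (V3) $\bigcup_{p\in D}V_p=X$. *)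

theory Defs
  imports "HOL-Analysis.Analysis"
begin

definition weighted_graph :: "'a set \<Rightarrow> ('a \<Rightarrow> 'a \<Rightarrow> real) \<Rightarrow> ('a \<Rightarrow> real) \<Rightarrow> bool" where
  "weighted_graph X b m \<longleftrightarrow> countable X \<and>
     (\<forall>x\<in>X. \<forall>y\<in>X. 0 \<le> b x y \<and> b x y = b y x) \<and>
     (\<forall>x\<in>X. b x x = 0) \<and>
     (\<forall>x\<in>X. (b x) summable_on X) \<and>
     (\<forall>x\<in>X. 0 < m x)"

definition cond_B :: "'a set \<Rightarrow> ('a \<Rightarrow> 'a \<Rightarrow> real) \<Rightarrow> ('a \<Rightarrow> real) \<Rightarrow> bool" where
  "cond_B X b m \<longleftrightarrow> (\<exists>C. \<forall>x\<in>X. infsum (b x) X / m x \<le> C)"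

definition cond_M :: "'a set \<Rightarrow> ('a \<Rightarrow> real) \<Rightarrow> bool" where
  "cond_M X m \<longleftrightarrow> (\<exists>C. \<forall>x\<in>X. m x \<le> C)"

definition is_path :: "'a set \<Rightarrow> ('a \<Rightarrow> 'a \<Rightarrow> real) \<Rightarrow> 'a list \<Rightarrow> 'a \<Rightarrow> 'a \<Rightarrow> bool" where
  "is_path X b \<gamma> x y \<longleftrightarrow> \<gamma> \<noteq> [] \<and> hd \<gamma> = x \<and> last \<gamma> = y \<and> set \<gamma> \<subseteq> X \<and>
     (\<forall>j. Suc j < length \<gamma> \<longrightarrow> 0 < b (\<gamma> ! j) (\<gamma> ! Suc j))"

definition path_length :: "('a \<Rightarrow> 'a \<Rightarrow> real) \<Rightarrow> 'a list \<Rightarrow> real" where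
  "path_length b \<gamma> = (\<Sum>j<length \<gamma> - 1. 1 / b (\<gamma> ! j) (\<gamma> ! Suc j))"

definition graph_connected :: "'a set \<Rightarrow> ('a \<Rightarrow> 'a \<Rightarrow> real) \<Rightarrow> bool" where
  "graph_connected X b \<longleftrightarrow> (\<forall>x\<in>X. \<forall>y\<in>X. \<exists>\<gamma>. is_path X b \<gamma> x y)"

definition gdist :: "'a set \<Rightarrow> ('a \<Rightarrow> 'a \<Rightarrow> real) \<Rightarrow> 'a \<Rightarrow> 'a \<Rightarrow> real" where
  "gdist X b x y = Inf {path_length b \<gamma> | \<gamma>. is_path X b \<gamma> x y}"

definition gball :: "'a set \<Rightarrow> ('a \<Rightarrow> 'a \<Rightarrow> real) \<Rightarrow> 'a \<Rightarrow> real \<Rightarrow> 'a set" where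
  "gball X b x r = {y \<in> X. gdist X b x y \<le> r}"

text \<open>Covering radius, valued in [0,\<infinity>] (Inf of the empty set is \<infinity>).\<close>
definition Covr :: "'a set \<Rightarrow> ('a \<Rightarrow> 'a \<Rightarrow> real) \<Rightarrow> 'a set \<Rightarrow> ereal" where
  "Covr X b D = Inf (ereal ` {R. 0 < R \<and> (\<Union>p\<in>D. gball X b p R) = X})"

definition voronoi_decomposition ::
  "'a set \<Rightarrow> ('a \<Rightarrow> 'a \<Rightarrow> real) \<Rightarrow> 'a set \<Rightarrow> ('a \<Rightarrow> 'a set) \<Rightarrow> bool" where
  "voronoi_decomposition X b D V \<longleftrightarrow>
     (\<forall>p\<in>D. \<forall>q\<in>D. p \<noteq> q \<longrightarrow> V p \<inter> V q = {}) \<and>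
     (\<forall>p\<in>D. p \<in> V p \<and>
        (\<forall>x\<in>V p. \<exists>\<gamma>. is_path X b \<gamma> p x \<and> set \<gamma> \<subseteq> V p \<and> path_length b \<gamma> = gdist X b p x)) \<and>
     (\<forall>p\<in>D. \<forall>x\<in>V p. \<forall>q\<in>D. gdist X b p x \<le> gdist X b q x) \<and>
     (\<Union>p\<in>D. V p) = X"

end

theory Submission
  imports Defs
begin

fun pl :: "('a\<Rightarrow>'a\<Rightarrow>real) \<Rightarrow> 'a list \<Rightarrow> real" where
  "pl b (x#y#ys) = 1 / b x y + pl b (y#ys)" | "pl b _ = 0"

fun edges :: "('a\<Rightarrow>'a\<Rightarrow>bool) \<Rightarrow> 'a list \<Rightarrow> bool" where
  "edges P (x#y#ys) = (P x y \<and> edges P (y#ys))" | "edges P _ = True"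

lemma path_length_pl: "path_length b \<gamma> = pl b \<gamma>"
proof (induction b \<gamma> rule: pl.induct)
  case (1 b x y ys)
  have "path_length b (x#y#ys) = (\<Sum>j<Suc (length ys). 1/b ((x#y#ys)!j) ((x#y#ys)!Suc j))"
    by (simp add: path_length_def del: sum.lessThan_Suc)
  also have "\<dots> = 1/b x y + (\<Sum>j<length ys. 1/b ((y#ys)!j) ((y#ys)!Suc j))"
    by (subst sum.lessThan_Suc_shift) simp
  also have "(\<Sum>j<length ys. 1/b ((y#ys)!j) ((y#ys)!Suc j)) = path_length b (y#ys)"
    by (simp add: path_length_def)
  finally show ?case using 1 by simp
qed (simp_all add: path_length_def)

lemma edges_nth: "(\<forall>j. Suc j < length \<gamma> \<longrightarrow> P (\<gamma>!j) (\<gamma>!Suc j)) \<longleftrightarrow> edges P \<gamma>"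
proof (induction P \<gamma> rule: edges.induct)
  case (1 P x y ys)
  have "(\<forall>j. Suc j < length (x#y#ys) \<longrightarrow> P ((x#y#ys)!j) ((x#y#ys)!Suc j)) \<longleftrightarrow>
     P x y \<and> (\<forall>j. Suc j < length (y#ys) \<longrightarrow> P ((y#ys)!j) ((y#ys)!Suc j))"
    apply (rule iffI)
     apply (intro conjI allI impI)
      apply (drule spec[of _ 0]; simp)
     apply (drule_tac x="Suc j" in spec; simp)
    apply clarify
    subgoal for j by (cases j) auto
    done
  then show ?case using 1 by simp
qed auto

lemma is_path_iff: "is_path X b \<gamma> x y \<longleftrightarrow> \<gamma> \<noteq> [] \<and> hd \<gamma> = x \<and> last \<gamma> = y \<and> set \<gamma> \<subseteq> X \<and> edges (\<lambda>u v. 0 < b u v) \<gamma>"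
  unfolding is_path_def edges_nth[symmetric] by simp

lemma pl_append: "pl b (xs @ y # ys) = pl b (xs @ [y]) + pl b (y # ys)"
  by (induction xs rule: induct_list012) auto

lemma edges_append: "edges P (xs @ y # ys) \<longleftrightarrow> edges P (xs @ [y]) \<and> edges P (y # ys)"
  by (induction xs rule: induct_list012) auto

lemma edges_conj: "edges P g \<Longrightarrow> edges Q g \<Longrightarrow> edges (\<lambda>u v. P u v \<and> Q u v) g"
  by (induction P g rule: edges.induct) auto

lemma edges_mono: "edges P g \<Longrightarrow> (\<And>u v. u \<in> set g \<Longrightarrow> v \<in> set g \<Longrightarrow> P u v \<Longrightarrow> Q u v) \<Longrightarrow> edges Q g"
  by (induction P g rule: edges.induct) auto

lemma pl_nonneg: "edges (\<lambda>u v. 0 < b u v) g \<Longrightarrow> 0 \<le> pl b g"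
  by (induction b g rule: pl.induct) auto

lemma edge_le: "edges (\<lambda>u v. 0 < b u v) g \<Longrightarrow> pl b g \<le> r \<Longrightarrow> edges (\<lambda>u v. 1 / b u v \<le> r) g"
proof (induction b g arbitrary: r rule: pl.induct)
  case (1 b x y ys)
  then have "0 \<le> pl b (y#ys)" "0 < b x y" using pl_nonneg by auto
  moreover have "1 / b x y \<ge> 0" using \<open>0 < b x y\<close> by simp
  moreover have "1/b x y + pl b (y#ys) \<le> r" using 1(3) by simp
  ultimately have "1 / b x y \<le> r" "pl b (y#ys) \<le> r" by linarith+
  with 1 show ?case by auto
qed auto

lemma edges_rev: "edges P (rev g) \<longleftrightarrow> edges (\<lambda>u v. P v u) g"
proof (induction g rule: induct_list012)
  case (3 x y zs)
  have "rev (x#y#zs) = rev zs @ y # [x]" by simp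
  then have "edges P (rev (x#y#zs)) \<longleftrightarrow> edges P (rev zs @ [y]) \<and> P y x"
    using edges_append[of P "rev zs" y "[x]"] by simp
  then show ?case using 3 by (simp add: conj_commute)
qed auto

lemma pl_rev: "(\<And>u v. u \<in> set g \<Longrightarrow> v \<in> set g \<Longrightarrow> b u v = b v u) \<Longrightarrow> pl b (rev g) = pl b g"
proof (induction g rule: induct_list012)
  case (3 x y zs)
  have "rev (x#y#zs) = rev zs @ y # [x]" by simp
  then have "pl b (rev (x#y#zs)) = pl b (rev zs @ [y]) + 1 / b y x"
    using pl_append[of b "rev zs" y "[x]"] by simp
  moreover have "pl b (rev (y#zs)) = pl b (y#zs)" using 3 by auto
  moreover have "b y x = b x y" using 3(3) by simp
  ultimately show ?case by simp
qed auto

fun reach :: "'a set \<Rightarrow> ('a\<Rightarrow>'a\<Rightarrow>real) \<Rightarrow> real \<Rightarrow> 'a \<Rightarrow> nat \<Rightarrow> 'a set" where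
  "reach X b e x 0 = {x}"
| "reach X b e x (Suc n) = reach X b e x n \<union> (\<Union>z\<in>reach X b e x n. {y\<in>X. e \<le> b z y})"

lemma reach_mono: "reach X b e x n \<subseteq> reach X b e x (n + k)"
  by (induction k) auto

lemma reach_sub: "x \<in> X \<Longrightarrow> reach X b e x n \<subseteq> X"
  by (induction n) auto

lemma reach_path:
  "edges (\<lambda>u v. e \<le> b u v) g \<Longrightarrow> set g \<subseteq> X \<Longrightarrow> g \<noteq> [] \<Longrightarrow> hd g \<in> reach X b e x n
   \<Longrightarrow> length g \<le> Suc k \<Longrightarrow> set g \<subseteq> reach X b e x (n + k)"
proof (induction g arbitrary: n k rule: induct_list012)
  case (2 a)
  then show ?case using reach_mono[of X b e x n k] by auto
next
  case (3 a y zs)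
  then obtain k' where k: "k = Suc k'" by (cases k) auto
  have "y \<in> reach X b e x (Suc n)" using 3 by auto
  then have "set (y#zs) \<subseteq> reach X b e x (Suc n + k')"
    apply (intro 3(2)) using 3(3-7) k by auto
  moreover have "a \<in> reach X b e x (n + k)" using 3(6) reach_mono[of X b e x n k] by auto
  ultimately show ?case using k by auto
qed auto

locale G =
  fixes X :: "'a set" and b :: "'a \<Rightarrow> 'a \<Rightarrow> real" and K :: real
  assumes sym: "\<And>x y. x\<in>X \<Longrightarrow> y\<in>X \<Longrightarrow> b x y = b y x"
    and Kpos: "0 < K"
    and bK: "\<And>x y. x\<in>X \<Longrightarrow> y\<in>X \<Longrightarrow> b x y \<le> K"
    and fin: "\<And>x e. x\<in>X \<Longrightarrow> 0<e \<Longrightarrow> finite {y\<in>X. e \<le> b x y}"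
    and conn: "graph_connected X b"
begin

lemma reach_finite: "x \<in> X \<Longrightarrow> 0 < e \<Longrightarrow> finite (reach X b e x n)"
proof (induction n)
  case (Suc n)
  have "\<forall>z\<in>reach X b e x n. finite {y\<in>X. e \<le> b z y}"
    using fin reach_sub[OF Suc(2)] Suc(3) by blast
  then show ?case using Suc by simp
qed simp

lemma len_bound: "set g \<subseteq> X \<Longrightarrow> edges (\<lambda>u v. 0 < b u v) g \<Longrightarrow> real (length g) - 1 \<le> K * pl b g"
proof (induction g rule: induct_list012)
  case (3 x y ys)
  have bp: "0 < b x y" "b x y \<le> K" using 3 bK by auto
  then have "1 \<le> K * (1 / b x y)" by (simp add: field_simps)
  moreover have "real (length (y#ys)) - 1 \<le> K * pl b (y#ys)" using 3 by auto
  ultimately show ?case by (simp add: algebra_simps)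
qed auto

lemma finQ: "x \<in> X \<Longrightarrow> finite {g. g \<noteq> [] \<and> hd g = x \<and> set g \<subseteq> X \<and> edges (\<lambda>u v. 0 < b u v) g \<and> pl b g \<le> r}"
proof -
  assume x: "x \<in> X"
  define e where "e = 1/(\<bar>r\<bar>+1)"
  define N where "N = nat \<lceil>K*\<bar>r\<bar>\<rceil>"
  have e: "0 < e" unfolding e_def by simp
  have "{g. g \<noteq> [] \<and> hd g = x \<and> set g \<subseteq> X \<and> edges (\<lambda>u v. 0 < b u v) g \<and> pl b g \<le> r}
      \<subseteq> {xs. set xs \<subseteq> reach X b e x N \<and> length xs \<le> Suc N}"
  proof
    fix g assume "g \<in> {g. g \<noteq> [] \<and> hd g = x \<and> set g \<subseteq> X \<and> edges (\<lambda>u v. 0 < b u v) g \<and> pl b g \<le> r}"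
    then have g: "g \<noteq> []" "x = hd g" "set g \<subseteq> X" "edges (\<lambda>u v. 0 < b u v) g" "pl b g \<le> r" by auto
    have ee: "edges (\<lambda>u v. e \<le> b u v) g"
    proof (rule edges_mono[OF edges_conj[OF g(4) edge_le[OF g(4) g(5)]]])
      fix u v assume uv: "0 < b u v \<and> 1 / b u v \<le> r"
      then have "1 \<le> r * b u v" by (auto simp: divide_le_eq mult.commute)
      also have "\<dots> \<le> \<bar>r\<bar> * b u v" using uv by (simp add: mult_right_mono)
      finally have "1 \<le> (\<bar>r\<bar>+1) * b u v - b u v" by (simp add: algebra_simps)
      then have "1 \<le> (\<bar>r\<bar>+1) * b u v" using uv by linarith
      then show "e \<le> b u v" unfolding e_def
        by (simp add: field_simps add_pos_nonneg)
    qed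
    have "real (length g) - 1 \<le> K * pl b g" using len_bound g by auto
    also have "\<dots> \<le> K * \<bar>r\<bar>" using g(5) Kpos by (simp add: mult_left_mono)
    also have "\<dots> \<le> real N" unfolding N_def by linarith
    finally have len: "length g \<le> Suc N" by simp
    have "set g \<subseteq> reach X b e x (0 + N)"
      using reach_path[OF ee g(3) g(1), of x 0 N] g len by auto
    then show "g \<in> {xs. set xs \<subseteq> reach X b e x N \<and> length xs \<le> Suc N}" using len by simp
  qed
  moreover have "finite {xs. set xs \<subseteq> reach X b e x N \<and> length xs \<le> Suc N}"
    by (rule finite_lists_length_le[OF reach_finite[OF x e]])
  ultimately show ?thesis by (rule finite_subset)
qed

lemma path_nonneg: "is_path X b g x y \<Longrightarrow> 0 \<le> path_length b g"
  unfolding is_path_iff path_length_pl using pl_nonneg by blast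

lemma gdist_le: "is_path X b g x y \<Longrightarrow> gdist X b x y \<le> path_length b g"
  unfolding gdist_def
  by (rule cInf_lower) (auto intro!: bdd_belowI[of _ 0] path_nonneg)

lemma geo: "x\<in>X \<Longrightarrow> y\<in>X \<Longrightarrow> \<exists>g. is_path X b g x y \<and> path_length b g = gdist X b x y"
proof -
  assume x: "x\<in>X" and y: "y\<in>X"
  obtain g0 where g0: "is_path X b g0 x y" using conn x y unfolding graph_connected_def by blast
  define L where "L = pl b g0"
  define P where "P = {g. is_path X b g x y \<and> pl b g \<le> L}"
  have "P \<subseteq> {g. g \<noteq> [] \<and> hd g = x \<and> set g \<subseteq> X \<and> edges (\<lambda>u v. 0 < b u v) g \<and> pl b g \<le> L}"
    unfolding P_def is_path_iff by auto
  then have fP: "finite P" using finQ[OF x] finite_subset by blast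
  have g0P: "g0 \<in> P" unfolding P_def L_def using g0 by simp
  define mn where "mn = Min (pl b ` P)"
  have "mn \<in> pl b ` P" unfolding mn_def using fP g0P by (intro Min_in) auto
  then obtain g1 where g1: "g1 \<in> P" "pl b g1 = mn" by auto
  have mle: "\<And>g. g \<in> P \<Longrightarrow> mn \<le> pl b g" unfolding mn_def using fP by simp
  have "gdist X b x y = mn"
    unfolding gdist_def
  proof (rule cInf_eq_minimum)
    show "mn \<in> {path_length b \<gamma> |\<gamma>. is_path X b \<gamma> x y}"
      using g1 unfolding P_def path_length_pl by auto
  next
    fix z assume "z \<in> {path_length b \<gamma> |\<gamma>. is_path X b \<gamma> x y}"
    then obtain g where g: "is_path X b g x y" "z = pl b g" unfolding path_length_pl by auto
    show "mn \<le> z"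
    proof (cases "pl b g \<le> L")
      case True then show ?thesis using mle g unfolding P_def by auto
    next
      case False then show ?thesis using mle[OF g0P] g unfolding L_def by auto
    qed
  qed
  then show ?thesis using g1 unfolding P_def path_length_pl by auto
qed

lemma gdist_nonneg: "x\<in>X \<Longrightarrow> y\<in>X \<Longrightarrow> 0 \<le> gdist X b x y"
  using geo path_nonneg by metis

lemma gdist_refl: "x\<in>X \<Longrightarrow> gdist X b x x = 0"
proof -
  assume x: "x \<in> X"
  have "is_path X b [x] x x" using x unfolding is_path_def by simp
  then have "gdist X b x x \<le> 0" using gdist_le by (fastforce simp: path_length_def)
  then show ?thesis using gdist_nonneg[OF x x] by simp
qed

lemma gdist_pos: "x\<in>X \<Longrightarrow> y\<in>X \<Longrightarrow> x \<noteq> y \<Longrightarrow> 0 < gdist X b x y"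
proof -
  assume x: "x\<in>X" and y: "y\<in>X" and xy: "x \<noteq> y"
  obtain g where g: "is_path X b g x y" "path_length b g = gdist X b x y" using geo x y by blast
  have "length g \<noteq> 1" using g(1) xy unfolding is_path_def
    by (cases g) auto
  moreover have "g \<noteq> []" using g(1) unfolding is_path_def by simp
  ultimately have "2 \<le> length g" by (cases g) (auto simp: Suc_le_eq)
  moreover have "real (length g) - 1 \<le> K * pl b g" using len_bound g(1) unfolding is_path_iff by auto
  ultimately have "0 < K * pl b g" by simp
  then have "0 < pl b g" using Kpos by (simp add: zero_less_mult_iff)
  then show ?thesis using g(2) path_length_pl by metis
qed

lemma path_rev: "is_path X b g x y \<Longrightarrow> is_path X b (rev g) y x \<and> path_length b (rev g) = path_length b g"
proof -
  assume g: "is_path X b g x y"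
  then have sX: "set g \<subseteq> X" unfolding is_path_def by simp
  have "edges (\<lambda>u v. 0 < b v u) g"
    using g unfolding is_path_iff by (auto elim!: edges_mono simp: sym subsetD)
  then have "is_path X b (rev g) y x" using g unfolding is_path_iff
    by (auto simp: edges_rev hd_rev last_rev)
  moreover have "pl b (rev g) = pl b g" using sX by (intro pl_rev) (auto intro: sym)
  ultimately show ?thesis by (simp add: path_length_pl)
qed

lemma gdist_sym: "x\<in>X \<Longrightarrow> y\<in>X \<Longrightarrow> gdist X b x y = gdist X b y x"
proof -
  have *: "gdist X b y x \<le> gdist X b x y" if xy: "x\<in>X" "y\<in>X" for x y
  proof -
    obtain g where g: "is_path X b g x y" "path_length b g = gdist X b x y" using geo[OF xy] by blast
    show ?thesis using gdist_le path_rev[OF g(1)] g(2) by metis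
  qed
  assume "x\<in>X" "y\<in>X" then show ?thesis using *[of x y] *[of y x] by simp
qed

lemma path_split_iff:
  "is_path X b (xs @ z # ys) x y \<longleftrightarrow> is_path X b (xs @ [z]) x z \<and> is_path X b (z # ys) z y"
  unfolding is_path_iff using edges_append[of _ xs z ys]
  by (cases xs) auto

lemma triangle: "x\<in>X \<Longrightarrow> y\<in>X \<Longrightarrow> z\<in>X \<Longrightarrow> gdist X b x z \<le> gdist X b x y + gdist X b y z"
proof -
  assume x: "x\<in>X" and y: "y\<in>X" and z: "z\<in>X"
  obtain g1 where g1: "is_path X b g1 x y" "path_length b g1 = gdist X b x y" using geo x y by blast
  obtain g2 where g2: "is_path X b g2 y z" "path_length b g2 = gdist X b y z" using geo y z by blast
  have "g1 = butlast g1 @ [y]" using g1(1) unfolding is_path_def by (metis append_butlast_last_id)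
  moreover obtain t where "g2 = y # t" using g2(1) unfolding is_path_def by (cases g2) auto
  ultimately have p: "is_path X b (butlast g1 @ y # t) x z"
    "path_length b (butlast g1 @ y # t) = gdist X b x y + gdist X b y z"
    using g1 g2 path_split_iff[of "butlast g1" y t x z] pl_append[of b "butlast g1" y t]
    by (auto simp: path_length_pl)
  show ?thesis using gdist_le[OF p(1)] p(2) by simp
qed

lemma fin_vals: "x \<in> X \<Longrightarrow> D \<subseteq> X \<Longrightarrow> finite {gdist X b q x | q. q \<in> D \<and> gdist X b q x \<le> r}"
proof -
  assume x: "x \<in> X" and D: "D \<subseteq> X"
  have "{gdist X b q x | q. q \<in> D \<and> gdist X b q x \<le> r} \<subseteq>
     pl b ` {g. g \<noteq> [] \<and> hd g = x \<and> set g \<subseteq> X \<and> edges (\<lambda>u v. 0 < b u v) g \<and> pl b g \<le> r}"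
  proof
    fix z assume "z \<in> {gdist X b q x | q. q \<in> D \<and> gdist X b q x \<le> r}"
    then obtain q where q: "q \<in> D" "z = gdist X b q x" "gdist X b q x \<le> r" by auto
    have qX: "q \<in> X" using q D by auto
    obtain g where g: "is_path X b g x q" "path_length b g = gdist X b x q" using geo[OF x qX] by blast
    have "z = pl b g" using g q gdist_sym[OF x qX] by (simp add: path_length_pl)
    then show "z \<in> pl b ` {g. g \<noteq> [] \<and> hd g = x \<and> set g \<subseteq> X \<and> edges (\<lambda>u v. 0 < b u v) g \<and> pl b g \<le> r}"
      using g q unfolding is_path_iff by auto
  qed
  then show ?thesis using finQ[OF x] finite_subset by blast
qed

lemma voronoi_exists:
  assumes D: "D \<subseteq> X" "D \<noteq> {}" "countable D"
  shows "\<exists>V. voronoi_decomposition X b D V"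
proof -
  define idx where "idx = to_nat_on D"
  have inj: "inj_on idx D" unfolding idx_def using D(3) by auto
  define V where "V p = {x\<in>X. \<forall>q\<in>D. gdist X b p x \<le> gdist X b q x \<and>
      (gdist X b q x = gdist X b p x \<longrightarrow> idx p \<le> idx q)}" for p
  have disj: "\<forall>p\<in>D. \<forall>q\<in>D. p \<noteq> q \<longrightarrow> V p \<inter> V q = {}"
  proof (intro ballI impI)
    fix p q assume pq: "p \<in> D" "q \<in> D" "p \<noteq> q"
    show "V p \<inter> V q = {}"
    proof (rule ccontr)
      assume "V p \<inter> V q \<noteq> {}"
      then obtain x where x: "x \<in> V p" "x \<in> V q" by auto
      have a: "gdist X b p x \<le> gdist X b q x \<and> (gdist X b q x = gdist X b p x \<longrightarrow> idx p \<le> idx q)"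
        using x(1) pq(2) unfolding V_def by blast
      have c: "gdist X b q x \<le> gdist X b p x \<and> (gdist X b p x = gdist X b q x \<longrightarrow> idx q \<le> idx p)"
        using x(2) pq(1) unfolding V_def by blast
      from a c have "idx p \<le> idx q" "idx q \<le> idx p" by auto
      then have "idx p = idx q" by simp
      then show False using inj pq by (auto dest: inj_onD)
    qed
  qed
  have self: "p \<in> V p" if p: "p \<in> D" for p
  proof -
    have pX: "p \<in> X" using p D by auto
    { fix q assume q: "q \<in> D"
      have qX: "q \<in> X" using q D by auto
      have "gdist X b p p \<le> gdist X b q p" using gdist_refl[OF pX] gdist_nonneg[OF qX pX] by simp
      moreover have "gdist X b q p = gdist X b p p \<longrightarrow> idx p \<le> idx q"
        using gdist_refl[OF pX] gdist_pos[OF qX pX] by (cases "q = p") auto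
      ultimately have "gdist X b p p \<le> gdist X b q p \<and> (gdist X b q p = gdist X b p p \<longrightarrow> idx p \<le> idx q)" by simp }
    then show ?thesis unfolding V_def using pX by auto
  qed
  have V1: "\<exists>\<gamma>. is_path X b \<gamma> p x \<and> set \<gamma> \<subseteq> V p \<and> path_length b \<gamma> = gdist X b p x"
    if p: "p \<in> D" and x: "x \<in> V p" for p x
  proof -
    have pX: "p \<in> X" using p D by auto
    have xX: "x \<in> X" using x unfolding V_def by auto
    obtain g where g: "is_path X b g p x" "path_length b g = gdist X b p x" using geo[OF pX xX] by blast
    have "set g \<subseteq> V p"
    proof
      fix z assume z: "z \<in> set g"
      then obtain xs ys where gs: "g = xs @ z # ys" by (meson split_list)
      have zX: "z \<in> X" using z g(1) unfolding is_path_def by auto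
      have p1: "is_path X b (xs @ [z]) p z" "is_path X b (z # ys) z x" using iffD1[OF path_split_iff g(1)[unfolded gs]] by auto
      have "pl b g = pl b (xs @ [z]) + pl b (z # ys)" using gs pl_append by simp
      then have "gdist X b p z + gdist X b z x \<le> gdist X b p x"
        using gdist_le[OF p1(1)] gdist_le[OF p1(2)] g(2) by (simp add: path_length_pl)
      then have eq: "gdist X b p z + gdist X b z x = gdist X b p x" using triangle[OF pX zX xX] by simp
      { fix q assume q: "q \<in> D"
        have qX: "q \<in> X" using q D by auto
        have t: "gdist X b q x \<le> gdist X b q z + gdist X b z x" using triangle[OF qX zX xX] .
        have px: "gdist X b p x \<le> gdist X b q x" and pxi: "gdist X b q x = gdist X b p x \<longrightarrow> idx p \<le> idx q"
          using x q unfolding V_def by auto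
        have 1: "gdist X b p z \<le> gdist X b q z" using t px eq by linarith
        have "gdist X b q z = gdist X b p z \<longrightarrow> idx p \<le> idx q"
        proof
          assume "gdist X b q z = gdist X b p z"
          then have "gdist X b q x = gdist X b p x" using t px eq by linarith
          then show "idx p \<le> idx q" using pxi by simp
        qed
        note 1 this }
      then show "z \<in> V p" unfolding V_def using zX by auto
    qed
    then show ?thesis using g by blast
  qed
  have V3: "x \<in> (\<Union>p\<in>D. V p)" if x: "x \<in> X" for x
  proof -
    obtain p0 where p0: "p0 \<in> D" using D(2) by auto
    define F where "F = {gdist X b q x | q. q \<in> D \<and> gdist X b q x \<le> gdist X b p0 x}"
    have fF: "finite F" unfolding F_def using fin_vals[OF x D(1)] .
    have "gdist X b p0 x \<in> F" unfolding F_def using p0 by auto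
    then have ne: "F \<noteq> {}" by auto
    define d where "d = Min F"
    have "d \<in> F" unfolding d_def using fF ne by simp
    then have ex: "\<exists>q\<in>D. gdist X b q x = d" unfolding F_def by auto
    have dle: "d \<le> gdist X b q x" if "q \<in> D" for q
    proof (cases "gdist X b q x \<le> gdist X b p0 x")
      case True
      then have "gdist X b q x \<in> F" unfolding F_def using that by auto
      then show ?thesis unfolding d_def using fF by simp
    next
      case False
      have "d \<le> gdist X b p0 x" unfolding d_def using fF \<open>gdist X b p0 x \<in> F\<close> by simp
      then show ?thesis using False by simp
    qed
    define n where "n = (LEAST n. \<exists>q\<in>D. gdist X b q x = d \<and> idx q = n)"
    have "\<exists>n. \<exists>q\<in>D. gdist X b q x = d \<and> idx q = n" using ex by blast
    then have "\<exists>q\<in>D. gdist X b q x = d \<and> idx q = n" unfolding n_def by (rule LeastI_ex)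
    then obtain p where p: "p \<in> D" "gdist X b p x = d" "idx p = n" by auto
    have "x \<in> V p" unfolding V_def
    proof (intro CollectI conjI ballI x impI)
      fix q assume q: "q \<in> D"
      show "gdist X b p x \<le> gdist X b q x" using dle[OF q] p by simp
      assume "gdist X b q x = gdist X b p x"
      then show "idx p \<le> idx q" unfolding p(3) n_def using q p(2) by (auto intro: Least_le)
    qed
    then show ?thesis using p by auto
  qed
  have "voronoi_decomposition X b D V"
    unfolding voronoi_decomposition_def
  proof (intro conjI)
    show "\<forall>p\<in>D. \<forall>q\<in>D. p \<noteq> q \<longrightarrow> V p \<inter> V q = {}" by (rule disj)
    show "\<forall>p\<in>D. p \<in> V p \<and> (\<forall>x\<in>V p. \<exists>\<gamma>. is_path X b \<gamma> p x \<and> set \<gamma> \<subseteq> V p \<and> path_length b \<gamma> = gdist X b p x)"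
      using self V1 by blast
    show "\<forall>p\<in>D. \<forall>x\<in>V p. \<forall>q\<in>D. gdist X b p x \<le> gdist X b q x" unfolding V_def by auto
    show "(\<Union>p\<in>D. V p) = X"
    proof
      show "(\<Union>p\<in>D. V p) \<subseteq> X" unfolding V_def by blast
      show "X \<subseteq> (\<Union>p\<in>D. V p)" using V3 by blast
    qed
  qed
  then show ?thesis by blast
qed

end


theorem proposition3p8:
  fixes X :: "'a set" and b :: "'a \<Rightarrow> 'a \<Rightarrow> real" and m :: "'a \<Rightarrow> real" and D :: "'a set"
  assumes "weighted_graph X b m" and "cond_B X b m" and "cond_M X m"
    and "graph_connected X b" and "D \<subseteq> X" and "D \<noteq> {}"
  shows "(\<exists>V. voronoi_decomposition X b D V) \<and>
         (Covr X b D \<noteq> \<infinity> \<longrightarrow>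
            (\<forall>V. voronoi_decomposition X b D V \<longrightarrow>
               (\<forall>p\<in>D. V p \<subseteq> gball X b p (real_of_ereal (Covr X b D)))))"
proof
  have wgc: "countable X" and symm: "\<And>x y. x\<in>X \<Longrightarrow> y\<in>X \<Longrightarrow> b x y = b y x"
    and nn: "\<And>x y. x\<in>X \<Longrightarrow> y\<in>X \<Longrightarrow> 0 \<le> b x y"
    and summ: "\<And>x. x\<in>X \<Longrightarrow> (b x) summable_on X"
    and mpos: "\<And>x. x\<in>X \<Longrightarrow> 0 < m x"
    using assms(1) unfolding weighted_graph_def by blast+
  obtain C where C: "\<And>x. x\<in>X \<Longrightarrow> infsum (b x) X / m x \<le> C" using assms(2) unfolding cond_B_def by blast
  obtain M where M: "\<And>x. x\<in>X \<Longrightarrow> m x \<le> M" using assms(3) unfolding cond_M_def by blast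
  have le_inf: "b x y \<le> infsum (b x) X" if "x\<in>X" "y\<in>X" for x y
  proof -
    have "sum (b x) {y} \<le> infsum (b x) X"
      by (rule finite_sum_le_infsum[OF summ[OF that(1)]]) (use that nn in auto)
    then show ?thesis by simp
  qed
  have inf_nn: "0 \<le> infsum (b x) X" if "x\<in>X" for x
    by (rule infsum_nonneg) (use that nn in blast)
  obtain x0 where x0: "x0 \<in> X" using assms(5,6) by auto
  have "0 \<le> infsum (b x0) X / m x0" using inf_nn[OF x0] mpos[OF x0] by simp
  then have C0: "0 \<le> C" using C[OF x0] by linarith
  define K where "K = max 1 (C * M)"
  have bK: "b x y \<le> K" if "x\<in>X" "y\<in>X" for x y
  proof -
    have "infsum (b x) X \<le> C * m x" using C[OF that(1)] mpos[OF that(1)] by (simp add: pos_divide_le_eq)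
    also have "\<dots> \<le> C * M" using M[OF that(1)] C0 by (simp add: mult_left_mono)
    finally show ?thesis using le_inf[OF that] unfolding K_def by linarith
  qed
  have fin: "finite {y\<in>X. e \<le> b x y}" if x: "x\<in>X" and e: "0<e" for x e
  proof (rule ccontr)
    assume inf: "infinite {y\<in>X. e \<le> b x y}"
    obtain n :: nat where n: "infsum (b x) X / e < n" using reals_Archimedean2 by blast
    obtain F where F: "F \<subseteq> {y\<in>X. e \<le> b x y}" "finite F" "card F = n"
      using infinite_arbitrarily_large[OF inf] by blast
    have "real (card F) * e \<le> sum (b x) F" using F by (intro sum_bounded_below) auto
    also have "\<dots> \<le> infsum (b x) X" using F nn x by (intro finite_sum_le_infsum[OF summ[OF x]]) auto
    finally have "real n * e \<le> infsum (b x) X" using F by simp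
    then show False using n e by (simp add: divide_less_eq)
  qed
  have Kp: "0 < K" unfolding K_def by simp
  interpret G X b K
  proof
    show "\<And>x y. x\<in>X \<Longrightarrow> y\<in>X \<Longrightarrow> b x y = b y x" by (rule symm)
    show "0 < K" by (rule Kp)
    show "\<And>x y. x\<in>X \<Longrightarrow> y\<in>X \<Longrightarrow> b x y \<le> K" by (rule bK)
    show "\<And>x e. x\<in>X \<Longrightarrow> 0<e \<Longrightarrow> finite {y\<in>X. e \<le> b x y}" by (rule fin)
    show "graph_connected X b" by (rule assms(4))
  qed
  have "countable D" using wgc assms(5) by (rule countable_subset[rotated])
  then show "\<exists>V. voronoi_decomposition X b D V" using voronoi_exists assms(5,6) by blast
next
  show "Covr X b D \<noteq> \<infinity> \<longrightarrow>
            (\<forall>V. voronoi_decomposition X b D V \<longrightarrow>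
               (\<forall>p\<in>D. V p \<subseteq> gball X b p (real_of_ereal (Covr X b D))))"
  proof (intro impI allI ballI)
    fix V p assume cv: "Covr X b D \<noteq> \<infinity>" and V: "voronoi_decomposition X b D V" and p: "p \<in> D"
    define S where "S = {R. 0 < R \<and> (\<Union>p\<in>D. gball X b p R) = X}"
    have Cov: "Covr X b D = Inf (ereal ` S)" unfolding Covr_def S_def by simp
    have Sne: "S \<noteq> {}" using cv Cov by (auto simp: top_ereal_def)
    have bdd: "bdd_below S" unfolding S_def by (rule bdd_belowI[of _ 0]) auto
    have CovS: "real_of_ereal (Covr X b D) = Inf S" using Cov ereal_Inf'[OF bdd Sne] by (metis real_of_ereal.simps(1))
    show "V p \<subseteq> gball X b p (real_of_ereal (Covr X b D))"
    proof
      fix x assume x: "x \<in> V p"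
      have xX: "x \<in> X" using V x p unfolding voronoi_decomposition_def by blast
      have "gdist X b p x \<le> Inf S"
      proof (rule cInf_greatest[OF Sne])
        fix R assume R: "R \<in> S"
        then have "x \<in> (\<Union>p\<in>D. gball X b p R)" using xX unfolding S_def by auto
        then obtain q where q: "q \<in> D" "gdist X b q x \<le> R" unfolding gball_def by auto
        have "gdist X b p x \<le> gdist X b q x" using V x p q(1) unfolding voronoi_decomposition_def by blast
        then show "gdist X b p x \<le> R" using q by simp
      qed
      then show "x \<in> gball X b p (real_of_ereal (Covr X b D))" unfolding gball_def CovS using xX by simp
    qed
  qed
qed

end
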